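(* Let $r\geq 3$. There exists a constant $C$ depending only on $r$ such that the following holds. Let $G$ be an $n$-vertex $K_r$-minor free bipartite graph with vertex partition $A$ and $B$, where $|A|=k$ and $|B|=n-k$. Then $e(G)\leq (r-2)n+Ck$.
   Context: $e(G)$ denotes the number of edges of $G$. A graph is $K_r$-minor free if $K_r$ cannot be obtained from it by vertex deletions, edge deletions and edge contractions. *)

theory Defs
  imports Complex_Main
begin

text \<open>A finite simple graph is a pair (V, E): a finite vertex set V and a set E of
  edges, each edge being a 2-element subset of V. e(G) = card E.\<close>

definition simple_graph :: "'a set \<Rightarrow> 'a set set \<Rightarrow> bool" where
  "simple_graph V E \<longleftrightarrow> finite V \<and> (\<forall>e\<in>E. e \<subseteq> V \<and> card e = 2)"

definition delete_vertex :: "'a \<Rightarrow> 'a set \<times> 'a set set \<Rightarrow> 'a set \<times> 'a set set" where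
  "delete_vertex v G = (fst G - {v}, {e \<in> snd G. v \<notin> e})"

definition delete_edge :: "'a set \<Rightarrow> 'a set \<times> 'a set set \<Rightarrow> 'a set \<times> 'a set set" where
  "delete_edge e G = (fst G, snd G - {e})"

text \<open>Contracting the edge {u,v}: v is merged into u; parallel edges and loops are
  discarded, so the result is again simple.\<close>
definition contract_edge :: "'a \<Rightarrow> 'a \<Rightarrow> 'a set \<times> 'a set set \<Rightarrow> 'a set \<times> 'a set set" where
  "contract_edge u v G =
     (fst G - {v}, {e \<in> snd G. v \<notin> e} \<union> {{u, w} | w. {v, w} \<in> snd G \<and> w \<noteq> u})"

inductive minor_step :: "'a set \<times> 'a set set \<Rightarrow> 'a set \<times> 'a set set \<Rightarrow> bool" where
  del_v: "v \<in> fst G \<Longrightarrow> minor_step G (delete_vertex v G)"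
| del_e: "e \<in> snd G \<Longrightarrow> minor_step G (delete_edge e G)"
| contr: "{u, v} \<in> snd G \<Longrightarrow> u \<noteq> v \<Longrightarrow> minor_step G (contract_edge u v G)"

definition is_minor :: "'a set \<times> 'a set set \<Rightarrow> 'a set \<times> 'a set set \<Rightarrow> bool" where
  "is_minor H G \<longleftrightarrow> minor_step\<^sup>*\<^sup>* G H"

text \<open>A graph on vertex set W is (isomorphic to) K_r iff |W| = r and all pairs are edges.\<close>
definition complete_graph_on :: "'a set \<Rightarrow> 'a set set" where
  "complete_graph_on W = {e. e \<subseteq> W \<and> card e = 2}"

definition Kr_minor_free :: "nat \<Rightarrow> 'a set \<Rightarrow> 'a set set \<Rightarrow> bool" where
  "Kr_minor_free r V E \<longleftrightarrow>
     \<not> (\<exists>W. card W = r \<and> finite W \<and> is_minor (W, complete_graph_on W) (V, E))"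

definition bipartite_with :: "'a set \<Rightarrow> 'a set set \<Rightarrow> 'a set \<Rightarrow> 'a set \<Rightarrow> bool" where
  "bipartite_with V E A B \<longleftrightarrow> A \<union> B = V \<and> A \<inter> B = {} \<and>
     (\<forall>e\<in>E. \<exists>a\<in>A. \<exists>b\<in>B. e = {a, b})"

end

theory Submission
  imports Defs
begin

definition nb :: "'a set set \<Rightarrow> 'a \<Rightarrow> 'a set" where
  "nb E x = {w. {x, w} \<in> E}"

lemma simple_edge:
  assumes "simple_graph V E" "e \<in> E"
  obtains a b where "e = {a, b}" "a \<noteq> b" "a \<in> V" "b \<in> V"
  using assms unfolding simple_graph_def by (metis card_2_iff insert_subset)

lemma simple_finE: "simple_graph V E \<Longrightarrow> finite E"
  unfolding simple_graph_def by (meson Pow_iff finite_Pow_iff finite_subset subsetI)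

lemma nb_sub: "simple_graph V E \<Longrightarrow> nb E x \<subseteq> V"
  unfolding nb_def simple_graph_def by auto

lemma nb_fin: "simple_graph V E \<Longrightarrow> finite (nb E x)"
  using nb_sub simple_graph_def finite_subset by metis

lemma nb_noloop: "simple_graph V E \<Longrightarrow> x \<notin> nb E x"
  unfolding nb_def simple_graph_def by force

lemma nb_sym: "y \<in> nb E x \<longleftrightarrow> x \<in> nb E y"
  unfolding nb_def by (simp add: insert_commute)

lemma step_simple:
  assumes "minor_step G H" "simple_graph (fst G) (snd G)"
  shows "simple_graph (fst H) (snd H) \<and> fst H \<subseteq> fst G"
  using assms
proof cases
  case (del_v v)
  then show ?thesis using assms(2) unfolding simple_graph_def delete_vertex_def by auto
next
  case (del_e e)
  then show ?thesis using assms(2) unfolding simple_graph_def delete_edge_def by auto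
next
  case (contr u v)
  have fin: "finite (fst G - {v})" using assms(2) unfolding simple_graph_def by auto
  have uV: "u \<in> fst G" using contr assms(2) unfolding simple_graph_def by auto
  have "e \<subseteq> fst G - {v} \<and> card e = 2" if "e \<in> snd H" for e
  proof -
    from that contr have "(e \<in> snd G \<and> v \<notin> e) \<or> (\<exists>w. e = {u,w} \<and> {v,w} \<in> snd G \<and> w \<noteq> u)"
      unfolding contract_edge_def by auto
    then show ?thesis
    proof
      assume "e \<in> snd G \<and> v \<notin> e" then show ?thesis using assms(2) unfolding simple_graph_def by auto
    next
      assume "\<exists>w. e = {u,w} \<and> {v,w} \<in> snd G \<and> w \<noteq> u"
      then obtain w where w: "e = {u,w}" "{v,w} \<in> snd G" "w \<noteq> u" by blast
      from simple_edge[OF assms(2) w(2)] have "w \<in> fst G" "w \<noteq> v" using doubleton_eq_iff by metis+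
      then show ?thesis using w uV contr by auto
    qed
  qed
  moreover have "fst H = fst G - {v}" using contr unfolding contract_edge_def by simp
  ultimately show ?thesis using fin unfolding simple_graph_def by auto
qed

lemma steps_simple:
  assumes "minor_step\<^sup>*\<^sup>* G H" "simple_graph (fst G) (snd G)"
  shows "simple_graph (fst H) (snd H) \<and> fst H \<subseteq> fst G"
  using assms
proof (induction rule: rtranclp_induct)
  case base then show ?case by simp
next
  case (step y z) then show ?case using step_simple by blast
qed

lemma minor_trans: "is_minor H G \<Longrightarrow> is_minor G K \<Longrightarrow> is_minor H K"
  unfolding is_minor_def by auto

lemma free_minor: "Kr_minor_free r V E \<Longrightarrow> is_minor (V', E') (V, E) \<Longrightarrow> Kr_minor_free r V' E'"
  unfolding Kr_minor_free_def using minor_trans by blast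

lemma step_minor: "minor_step G H \<Longrightarrow> is_minor H G"
  unfolding is_minor_def by auto

lemma del_set:
  assumes "finite T" "T \<subseteq> V"
  shows "minor_step\<^sup>*\<^sup>* (V, E) (V - T, {e\<in>E. e \<inter> T = {}})"
  using assms
proof (induction T rule: finite_induct)
  case empty then show ?case by simp
next
  case (insert t T)
  then have IH: "minor_step\<^sup>*\<^sup>* (V, E) (V - T, {e\<in>E. e \<inter> T = {}})" by auto
  have tin: "t \<in> fst (V - T, {e\<in>E. e \<inter> T = {}})" using insert by simp
  have st: "minor_step (V - T, {e\<in>E. e \<inter> T = {}}) (delete_vertex t (V - T, {e\<in>E. e \<inter> T = {}}))"
    by (rule minor_step.del_v[OF tin])
  have eq: "delete_vertex t (V - T, {e\<in>E. e \<inter> T = {}}) = (V - insert t T, {e\<in>E. e \<inter> insert t T = {}})"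
    unfolding delete_vertex_def by auto
  show ?case using IH st eq by (simp add: rtranclp.rtrancl_into_rtrancl)
qed

lemma induced_minor:
  assumes "simple_graph V E" "S \<subseteq> V"
  shows "is_minor (S, {e\<in>E. e \<subseteq> S}) (V, E)"
proof -
  have "finite (V - S)" using assms unfolding simple_graph_def by auto
  from del_set[OF this, of V E] have "minor_step\<^sup>*\<^sup>* (V, E) (V - (V - S), {e\<in>E. e \<inter> (V - S) = {}})" by auto
  moreover have "V - (V - S) = S" using assms by auto
  moreover have "{e\<in>E. e \<inter> (V - S) = {}} = {e\<in>E. e \<subseteq> S}" using assms unfolding simple_graph_def by auto
  ultimately show ?thesis unfolding is_minor_def by simp
qed

lemma clique_minor:
  assumes "simple_graph V E" "S \<subseteq> V" "\<forall>a\<in>S. \<forall>b\<in>S. a \<noteq> b \<longrightarrow> {a, b} \<in> E"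
  shows "is_minor (S, complete_graph_on S) (V, E)"
proof -
  have "{e\<in>E. e \<subseteq> S} = complete_graph_on S"
  proof (rule set_eqI, rule iffI)
    fix e assume "e \<in> {e\<in>E. e \<subseteq> S}"
    then show "e \<in> complete_graph_on S" using assms(1) unfolding complete_graph_on_def simple_graph_def by auto
  next
    fix e assume "e \<in> complete_graph_on S"
    then have "e \<subseteq> S" "card e = 2" unfolding complete_graph_on_def by auto
    then obtain a b where "e = {a,b}" "a \<noteq> b" by (meson card_2_iff)
    then show "e \<in> {e\<in>E. e \<subseteq> S}" using assms(3) \<open>e \<subseteq> S\<close> by auto
  qed
  then show ?thesis using induced_minor[OF assms(1,2)] by simp
qed


definition lift :: "'a \<Rightarrow> 'a set \<times> 'a set set \<Rightarrow> 'a set \<times> 'a set set" where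
  "lift x G = (insert x (fst G), snd G \<union> {{x, w} | w. w \<in> fst G})"

lemma lift_del_v:
  assumes "v \<in> V" "x \<notin> V"
  shows "minor_step (lift x (V, E)) (lift x (delete_vertex v (V, E)))"
proof -
  have vx: "v \<noteq> x" using assms by auto
  have st: "minor_step (lift x (V, E)) (delete_vertex v (lift x (V, E)))"
    by (rule minor_step.del_v) (use assms in \<open>simp add: lift_def\<close>)
  have e1: "{e \<in> E \<union> {{x, w} | w. w \<in> V}. v \<notin> e} = {e \<in> E. v \<notin> e} \<union> {{x, w} | w. w \<in> V - {v}}"
    using vx by blast
  have e2: "insert x V - {v} = insert x (V - {v})" using vx by blast
  have "delete_vertex v (lift x (V, E)) = lift x (delete_vertex v (V, E))"
    unfolding lift_def delete_vertex_def fst_conv snd_conv e1 e2 ..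
  then show ?thesis using st by simp
qed

lemma lift_del_e:
  assumes "e \<in> E" "simple_graph V E" "x \<notin> V"
  shows "minor_step (lift x (V, E)) (lift x (delete_edge e (V, E)))"
proof -
  have st: "minor_step (lift x (V, E)) (delete_edge e (lift x (V, E)))"
    by (rule minor_step.del_e) (use assms in \<open>simp add: lift_def\<close>)
  have "e \<subseteq> V" using assms unfolding simple_graph_def by auto
  then have "x \<notin> e" using assms(3) by auto
  then have e1: "(E \<union> {{x, w} | w. w \<in> V}) - {e} = (E - {e}) \<union> {{x, w} | w. w \<in> V}"
    by blast
  have "delete_edge e (lift x (V, E)) = lift x (delete_edge e (V, E))"
    unfolding lift_def delete_edge_def fst_conv snd_conv e1 ..
  then show ?thesis using st by simp
qed

lemma lift_contr:
  assumes "{u, v} \<in> E" "u \<noteq> v" "simple_graph V E" "x \<notin> V"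
  shows "minor_step (lift x (V, E)) (lift x (contract_edge u v (V, E)))"
proof -
  have uV: "u \<in> V" and vV: "v \<in> V" using assms unfolding simple_graph_def by auto
  have ux: "u \<noteq> x" and vx: "v \<noteq> x" using uV vV assms(4) by auto
  have st: "minor_step (lift x (V, E)) (contract_edge u v (lift x (V, E)))"
    by (rule minor_step.contr) (use assms in \<open>simp_all add: lift_def\<close>)
  have A: "{e \<in> E \<union> {{x, w} | w. w \<in> V}. v \<notin> e} = {e \<in> E. v \<notin> e} \<union> {{x, w} | w. w \<in> V - {v}}"
    using vx by blast
  have B: "{{u, w} | w. {v, w} \<in> E \<union> {{x, w} | w. w \<in> V} \<and> w \<noteq> u}
      = {{u, w} | w. {v, w} \<in> E \<and> w \<noteq> u} \<union> {{u, x}}"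
  proof (rule set_eqI, rule iffI)
    fix e assume "e \<in> {{u, w} | w. {v, w} \<in> E \<union> {{x, w} | w. w \<in> V} \<and> w \<noteq> u}"
    then obtain w where w: "e = {u, w}" "{v, w} \<in> E \<or> (\<exists>w'. {v, w} = {x, w'} \<and> w' \<in> V)" "w \<noteq> u" by blast
    show "e \<in> {{u, w} | w. {v, w} \<in> E \<and> w \<noteq> u} \<union> {{u, x}}"
    proof (cases "{v, w} \<in> E")
      case True then show ?thesis using w by blast
    next
      case False
      then obtain w' where "{v, w} = {x, w'}" using w by blast
      then have "w = x" using vx by (auto simp: doubleton_eq_iff)
      then show ?thesis using w by blast
    qed
  next
    fix e assume "e \<in> {{u, w} | w. {v, w} \<in> E \<and> w \<noteq> u} \<union> {{u, x}}"
    then show "e \<in> {{u, w} | w. {v, w} \<in> E \<union> {{x, w} | w. w \<in> V} \<and> w \<noteq> u}"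
    proof
      assume "e \<in> {{u, w} | w. {v, w} \<in> E \<and> w \<noteq> u}" then show ?thesis by blast
    next
      assume "e \<in> {{u, x}}"
      then have "e = {u, x}" by simp
      moreover have "{v, x} \<in> {{x, w} | w. w \<in> V}" using vV by (auto simp: insert_commute)
      ultimately show ?thesis using ux by blast
    qed
  qed
  have C: "{{x, w} | w. w \<in> V - {v}} \<union> {{u, x}} = {{x, w} | w. w \<in> V - {v}}"
    using uV assms(2) by (auto simp: insert_commute)
  have D: "insert x V - {v} = insert x (V - {v})" using vx by blast
  have "contract_edge u v (lift x (V, E)) = lift x (contract_edge u v (V, E))"
    unfolding lift_def contract_edge_def fst_conv snd_conv A B D
    using C by blast
  then show ?thesis using st by simp
qed

lemma lift_step:
  assumes "minor_step G H" "simple_graph (fst G) (snd G)" "x \<notin> fst G"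
  shows "minor_step (lift x G) (lift x H)"
proof -
  obtain V E where G: "G = (V, E)" by (cases G)
  have m: "minor_step (V, E) H" using assms(1) G by simp
  have s: "simple_graph V E" "x \<notin> V" using assms(2,3) G by auto
  have "minor_step (lift x (V, E)) (lift x H)" using m
  proof cases
    case (del_v v) then show ?thesis using lift_del_v s by simp
  next
    case (del_e e) then show ?thesis using lift_del_e s by simp
  next
    case (contr u v) then show ?thesis using lift_contr s by simp
  qed
  then show ?thesis using G by simp
qed

lemma lift_steps:
  assumes "minor_step\<^sup>*\<^sup>* G H" "simple_graph (fst G) (snd G)" "x \<notin> fst G"
  shows "minor_step\<^sup>*\<^sup>* (lift x G) (lift x H)"
  using assms
proof (induction rule: rtranclp_induct)
  case base then show ?case by simp
next
  case (step y z)
  have yy: "simple_graph (fst y) (snd y) \<and> fst y \<subseteq> fst G" using steps_simple[OF step(1) step(4)] .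
  have "x \<notin> fst y" using yy step(5) by blast
  then have "minor_step (lift x y) (lift x z)" using lift_step[OF step(2)] yy by simp
  moreover have "minor_step\<^sup>*\<^sup>* (lift x G) (lift x y)" using step(3) step(4) step(5) by simp
  ultimately show ?case by (metis rtranclp.rtrancl_into_rtrancl)
qed


lemma inj_dbl: "inj_on (\<lambda>w. {v, w}) X"
  by (rule inj_onI) (auto simp: doubleton_eq_iff)

lemma edges_at:
  assumes "simple_graph V E"
  shows "{e\<in>E. v \<in> e} = (\<lambda>w. {v, w}) ` nb E v"
proof (rule set_eqI, rule iffI)
  fix e assume e: "e \<in> {e\<in>E. v \<in> e}"
  then obtain a b where ab: "e = {a, b}" "a \<noteq> b" using simple_edge[OF assms] by blast
  show "e \<in> (\<lambda>w. {v, w}) ` nb E v"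
  proof (cases "v = a")
    case True then show ?thesis using e ab unfolding nb_def by auto
  next
    case False then have "v = b" using e ab by auto
    then show ?thesis using e ab unfolding nb_def by (auto simp: insert_commute)
  qed
next
  fix e assume "e \<in> (\<lambda>w. {v, w}) ` nb E v"
  then show "e \<in> {e\<in>E. v \<in> e}" unfolding nb_def by auto
qed

lemma card_split:
  assumes "simple_graph V E"
  shows "card E = card {e\<in>E. v \<notin> e} + card (nb E v)"
proof -
  have f: "finite E" using simple_finE[OF assms] .
  have "E = {e\<in>E. v \<notin> e} \<union> {e\<in>E. v \<in> e}" by auto
  then have "card E = card {e\<in>E. v \<notin> e} + card {e\<in>E. v \<in> e}"
    using f by (metis (no_types, lifting) card_Un_disjoint disjoint_iff finite_Un mem_Collect_eq)
  moreover have "card {e\<in>E. v \<in> e} = card (nb E v)"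
    unfolding edges_at[OF assms] by (rule card_image[OF inj_dbl])
  ultimately show ?thesis by simp
qed

lemma nb_count:
  assumes "simple_graph V E" "u \<in> nb E v"
  shows "card (nb E v - {u} - nb E u) + 1 + card (nb E u \<inter> nb E v) = card (nb E v)"
proof -
  have f: "finite (nb E v)" using nb_fin[OF assms(1)] .
  have un: "u \<notin> nb E u" using nb_noloop[OF assms(1)] .
  have sub: "insert u (nb E u \<inter> nb E v) \<subseteq> nb E v" using assms(2) by auto
  have "nb E v - {u} - nb E u = nb E v - insert u (nb E u \<inter> nb E v)" by auto
  then have "card (nb E v - {u} - nb E u) = card (nb E v) - card (insert u (nb E u \<inter> nb E v))"
    using f sub by (simp add: card_Diff_subset finite_subset)
  moreover have "card (insert u (nb E u \<inter> nb E v)) = card (nb E u \<inter> nb E v) + 1"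
    using un f by (simp add: finite_subset)
  moreover have "card (insert u (nb E u \<inter> nb E v)) \<le> card (nb E v)"
    using f sub by (rule card_mono)
  ultimately show ?thesis by linarith
qed

definition newE :: "'a set set \<Rightarrow> 'a \<Rightarrow> 'a \<Rightarrow> 'a set set" where
  "newE E u v = (\<lambda>w. {u, w}) ` (nb E v - {u} - nb E u)"

lemma newE_card: "finite (nb E v) \<Longrightarrow> card (newE E u v) = card (nb E v - {u} - nb E u)"
  unfolding newE_def by (rule card_image[OF inj_dbl])

lemma newE_disj: "newE E u v \<inter> E = {}"
  unfolding newE_def nb_def by auto

lemma newE_sub: "newE E u v \<subseteq> snd (contract_edge u v (V, E))"
  unfolding newE_def contract_edge_def nb_def by (auto simp: insert_commute)

lemma contr_card:
  assumes "simple_graph V E" "{u, v} \<in> E" "u \<noteq> v"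
  shows "card {e\<in>E. v \<notin> e} + card (nb E v - {u} - nb E u) \<le> card (snd (contract_edge u v (V, E)))"
proof -
  have "minor_step (V, E) (contract_edge u v (V, E))" using assms by (intro minor_step.contr) auto
  then have "simple_graph (fst (contract_edge u v (V, E))) (snd (contract_edge u v (V, E)))"
    using step_simple assms(1) by fastforce
  then have f: "finite (snd (contract_edge u v (V, E)))" using simple_finE by blast
  have sub: "{e\<in>E. v \<notin> e} \<union> newE E u v \<subseteq> snd (contract_edge u v (V, E))"
    using newE_sub[of E u v V] unfolding contract_edge_def by auto
  have "card ({e\<in>E. v \<notin> e} \<union> newE E u v) = card {e\<in>E. v \<notin> e} + card (newE E u v)"
    using newE_disj[of E u v] f sub by (intro card_Un_disjoint) (auto intro: finite_subset)
  then show ?thesis using card_mono[OF f sub] newE_card[OF nb_fin[OF assms(1)]] by simp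
qed

lemma contr_cardA:
  assumes "simple_graph V E" "{u, v} \<in> E" "u \<noteq> v" "v \<notin> A" "u \<in> A" "nb E v \<subseteq> A"
  shows "card {e\<in>E. e \<subseteq> A} + card (nb E v - {u} - nb E u) \<le> card {e \<in> snd (contract_edge u v (V, E)). e \<subseteq> A}"
proof -
  have "minor_step (V, E) (contract_edge u v (V, E))" using assms by (intro minor_step.contr) auto
  then have "simple_graph (fst (contract_edge u v (V, E))) (snd (contract_edge u v (V, E)))"
    using step_simple assms(1) by fastforce
  then have f: "finite {e \<in> snd (contract_edge u v (V, E)). e \<subseteq> A}" using simple_finE by fastforce
  have n: "newE E u v \<subseteq> {e. e \<subseteq> A}" using assms(5,6) unfolding newE_def by auto
  have sub: "{e\<in>E. e \<subseteq> A} \<union> newE E u v \<subseteq> {e \<in> snd (contract_edge u v (V, E)). e \<subseteq> A}"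
    using newE_sub[of E u v V] n assms(4) unfolding contract_edge_def by auto
  have "card ({e\<in>E. e \<subseteq> A} \<union> newE E u v) = card {e\<in>E. e \<subseteq> A} + card (newE E u v)"
    using newE_disj[of E u v] f sub by (intro card_Un_disjoint) (auto intro: finite_subset)
  then show ?thesis using card_mono[OF f sub] newE_card[OF nb_fin[OF assms(1)]] by simp
qed

lemma handshake:
  assumes "simple_graph V E" "S \<subseteq> V"
  shows "(\<Sum>y\<in>S. card (nb E y \<inter> S)) = 2 * card {e\<in>E. e \<subseteq> S}"
proof -
  define F where "F = {e\<in>E. e \<subseteq> S}"
  have fS: "finite S" using assms unfolding simple_graph_def by (auto intro: finite_subset)
  have fF: "finite F" using simple_finE[OF assms(1)] F_def by auto
  have c1: "card (nb E y \<inter> S) = card {e\<in>F. y \<in> e}" if "y \<in> S" for y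
  proof -
    have "{e\<in>F. y \<in> e} = (\<lambda>w. {y, w}) ` (nb E y \<inter> S)"
    proof (rule set_eqI, rule iffI)
      fix e assume e: "e \<in> {e\<in>F. y \<in> e}"
      then have "e \<in> {e\<in>E. y \<in> e}" unfolding F_def by auto
      then obtain w where w: "w \<in> nb E y" "e = {y, w}" using edges_at[OF assms(1), of y] by auto
      then have "w \<in> S" using e unfolding F_def by auto
      then show "e \<in> (\<lambda>w. {y, w}) ` (nb E y \<inter> S)" using w by auto
    next
      fix e assume "e \<in> (\<lambda>w. {y, w}) ` (nb E y \<inter> S)"
      then show "e \<in> {e\<in>F. y \<in> e}" using that unfolding F_def nb_def by auto
    qed
    then show ?thesis using card_image[OF inj_dbl] by metis
  qed
  have c2: "card {e\<in>F. y \<in> e} = (\<Sum>e\<in>F. if y \<in> e then 1 else 0)" for y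
    using sum.inter_filter[OF fF, of "\<lambda>_. (1::nat)" "\<lambda>e. y \<in> e"] by simp
  have c3: "(\<Sum>y\<in>S. if y \<in> e then 1 else 0) = (2::nat)" if "e \<in> F" for e
  proof -
    have "(\<Sum>y\<in>S. if y \<in> e then 1 else 0) = card {y\<in>S. y \<in> e}"
      using sum.inter_filter[OF fS, of "\<lambda>_. (1::nat)" "\<lambda>y. y \<in> e"] by simp
    also have "{y\<in>S. y \<in> e} = e" using that F_def by auto
    also have "card e = 2" using that F_def assms(1) unfolding simple_graph_def by auto
    finally show ?thesis .
  qed
  have "(\<Sum>y\<in>S. card (nb E y \<inter> S)) = (\<Sum>y\<in>S. \<Sum>e\<in>F. if y \<in> e then 1 else 0)"
    using c1 c2 by simp
  also have "\<dots> = (\<Sum>e\<in>F. \<Sum>y\<in>S. if y \<in> e then 1 else 0)" by (rule sum.swap)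
  also have "\<dots> = (\<Sum>e\<in>F. 2)" using c3 by simp
  also have "\<dots> = 2 * card F" by simp
  finally show ?thesis unfolding F_def .
qed


fun Dm :: "nat \<Rightarrow> nat" where
  "Dm 0 = 0"
| "Dm (Suc r) = 2 * Dm r + 1"

lemma lift_induced:
  assumes "simple_graph V E" "N = nb E x"
  shows "lift x (N, {e\<in>E. e \<subseteq> N}) = (insert x N, {e\<in>E. e \<subseteq> insert x N})"
proof -
  have "{e\<in>E. e \<subseteq> N} \<union> {{x, w} | w. w \<in> N} = {e\<in>E. e \<subseteq> insert x N}"
  proof (rule set_eqI, rule iffI)
    fix e assume "e \<in> {e\<in>E. e \<subseteq> N} \<union> {{x, w} | w. w \<in> N}"
    then show "e \<in> {e\<in>E. e \<subseteq> insert x N}" using assms(2) unfolding nb_def by auto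
  next
    fix e assume e: "e \<in> {e\<in>E. e \<subseteq> insert x N}"
    show "e \<in> {e\<in>E. e \<subseteq> N} \<union> {{x, w} | w. w \<in> N}"
    proof (cases "x \<in> e")
      case True
      then have "e \<in> {e\<in>E. x \<in> e}" using e by auto
      then obtain w where "w \<in> nb E x" "e = {x, w}" using edges_at[OF assms(1), of x] by auto
      then show ?thesis using assms(2) by auto
    next
      case False then show ?thesis using e by auto
    qed
  qed
  then show ?thesis unfolding lift_def by simp
qed

lemma lift_complete:
  assumes "x \<notin> W"
  shows "lift x (W, complete_graph_on W) = (insert x W, complete_graph_on (insert x W))"
proof -
  have "complete_graph_on W \<union> {{x, w} | w. w \<in> W} = complete_graph_on (insert x W)"
  proof (rule set_eqI, rule iffI)
    fix e assume "e \<in> complete_graph_on W \<union> {{x, w} | w. w \<in> W}"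
    then show "e \<in> complete_graph_on (insert x W)"
      using assms unfolding complete_graph_on_def by (auto simp: card_2_iff)
  next
    fix e assume e: "e \<in> complete_graph_on (insert x W)"
    then have es: "e \<subseteq> insert x W" "card e = 2" unfolding complete_graph_on_def by auto
    then obtain a b where ab: "e = {a, b}" "a \<noteq> b" by (meson card_2_iff)
    show "e \<in> complete_graph_on W \<union> {{x, w} | w. w \<in> W}"
    proof (cases "x \<in> e")
      case True
      then have "a = x \<or> b = x" using ab by auto
      then show ?thesis
      proof
        assume "a = x" then show ?thesis using ab es by auto
      next
        assume "b = x" then show ?thesis using ab es by (auto simp: insert_commute)
      qed
    next
      case False then show ?thesis using es unfolding complete_graph_on_def by auto
    qed
  qed
  then show ?thesis unfolding lift_def by simp
qed

lemma mader:
  "simple_graph V E \<Longrightarrow> Dm r * card V < card E \<Longrightarrow>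
   \<exists>W. card W = r \<and> finite W \<and> is_minor (W, complete_graph_on W) (V, E)"
proof (induction r arbitrary: V E)
  case 0
  have "is_minor ({}, complete_graph_on {}) (V, E)" using clique_minor[OF 0(1), of "{}"] by simp
  then show ?case by (intro exI[of _ "{}"]) simp
next
  case (Suc r)
  define D where "D = Dm (Suc r)"
  have key: "\<And>(V::'a set) E. card V = n \<Longrightarrow> simple_graph V E \<Longrightarrow> D * card V < card E \<Longrightarrow>
     \<exists>W. card W = Suc r \<and> finite W \<and> is_minor (W, complete_graph_on W) (V, E)" for n
  proof (induction n rule: less_induct)
    case (less n V E)
    have sg: "simple_graph V E" using less by simp
    have "E \<noteq> {}" using less by auto
    then obtain e0 where "e0 \<in> E" by auto
    then obtain x y0 where xy: "e0 = {x, y0}" "x \<noteq> y0" "x \<in> V" "y0 \<in> V" using simple_edge[OF sg] by metis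
    define N where "N = nb E x"
    have y0N: "y0 \<in> N" using xy \<open>e0 \<in> E\<close> unfolding N_def nb_def by auto
    have NV: "N \<subseteq> V" using nb_sub[OF sg] N_def by auto
    have fN: "finite N" using nb_fin[OF sg] N_def by auto
    have xN: "x \<notin> N" using nb_noloop[OF sg] N_def by auto
    show ?case
    proof (cases "\<exists>y\<in>N. card (nb E y \<inter> N) < D")
      case True
      then obtain y where y: "y \<in> N" "card (nb E y \<inter> N) < D" by auto
      have xyE: "{x, y} \<in> E" using y unfolding N_def nb_def by auto
      have xny: "x \<noteq> y" using y xN by auto
      have yV: "y \<in> V" using y NV by auto
      define G' where "G' = contract_edge x y (V, E)"
      have st: "minor_step (V, E) G'" unfolding G'_def using xyE xny by (intro minor_step.contr) auto
      have sg': "simple_graph (fst G') (snd G')" using step_simple[OF st] sg by simp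
      have fV: "finite V" using sg simple_graph_def by auto
      have cV: "card (fst G') = card V - 1" unfolding G'_def contract_edge_def using yV fV by simp
      have cV1: "card V \<ge> 1" using yV fV by (metis One_nat_def Suc_leI card_gt_0_iff empty_iff)
      have c1: "card {e\<in>E. y \<notin> e} + card (nb E y - {x} - nb E x) \<le> card (snd G')"
        unfolding G'_def by (rule contr_card[OF sg xyE xny])
      have c2: "card E = card {e\<in>E. y \<notin> e} + card (nb E y)" by (rule card_split[OF sg])
      have xiny: "x \<in> nb E y" using y N_def nb_sym by metis
      have c3: "card (nb E y - {x} - nb E x) + 1 + card (nb E x \<inter> nb E y) = card (nb E y)"
        by (rule nb_count[OF sg xiny])
      have c4: "card (nb E x \<inter> nb E y) < D" using y(2) N_def by (simp add: Int_commute)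
      have "D * card V < card E" using less by simp
      have "card V = card (fst G') + 1" using cV cV1 by simp
      then have "D * card V = D * card (fst G') + D" by (simp add: algebra_simps)
      then have big: "D * card (fst G') < card (snd G')" using c1 c2 c3 c4 \<open>D * card V < card E\<close> by linarith
      have "card (fst G') < n" using cV cV1 less(2) by simp
      from less(1)[OF this refl sg' big] obtain W where W: "card W = Suc r" "finite W"
        "is_minor (W, complete_graph_on W) (fst G', snd G')" by blast
      have "is_minor G' (V, E)" using step_minor[OF st] .
      moreover have "is_minor (W, complete_graph_on W) G'" using W(3) by simp
      ultimately have "is_minor (W, complete_graph_on W) (V, E)" by (rule minor_trans[rotated])
      then show ?thesis using W(1,2) by blast
    next
      case False
      then have deg: "\<forall>y\<in>N. D \<le> card (nb E y \<inter> N)" by auto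
      define EN where "EN = {e\<in>E. e \<subseteq> N}"
      have hs: "(\<Sum>y\<in>N. card (nb E y \<inter> N)) = 2 * card EN" unfolding EN_def by (rule handshake[OF sg NV])
      have "(\<Sum>y\<in>N. D) \<le> (\<Sum>y\<in>N. card (nb E y \<inter> N))" using deg by (intro sum_mono) auto
      then have "D * card N \<le> 2 * card EN" using hs by (simp add: mult.commute)
      moreover have "card N \<ge> 1" using y0N fN by (metis One_nat_def Suc_leI card_gt_0_iff empty_iff)
      ultimately have big: "Dm r * card N < card EN" unfolding D_def by simp
      have sgN: "simple_graph N EN" using sg fN unfolding simple_graph_def EN_def by auto
      from Suc.IH[OF sgN big] obtain W where W: "card W = r" "finite W"
        "is_minor (W, complete_graph_on W) (N, EN)" by blast
      have ms: "minor_step\<^sup>*\<^sup>* (N, EN) (W, complete_graph_on W)" using W(3) unfolding is_minor_def .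
      have "fst (W, complete_graph_on W) \<subseteq> fst (N, EN)"
        using steps_simple[OF ms] sgN by simp
      then have xW: "x \<notin> W" using xN by auto
      have "minor_step\<^sup>*\<^sup>* (lift x (N, EN)) (lift x (W, complete_graph_on W))"
        using lift_steps[OF ms] sgN xN by simp
      then have m1: "is_minor (insert x W, complete_graph_on (insert x W)) (insert x N, {e\<in>E. e \<subseteq> insert x N})"
        unfolding is_minor_def EN_def lift_induced[OF sg N_def] lift_complete[OF xW] .
      have m2: "is_minor (insert x N, {e\<in>E. e \<subseteq> insert x N}) (V, E)"
        using induced_minor[OF sg] NV xy(3) by auto
      have "card (insert x W) = Suc r" using W xW by simp
      moreover have "is_minor (insert x W, complete_graph_on (insert x W)) (V, E)" using m1 m2 by (rule minor_trans)
      ultimately show ?thesis using W(2) by blast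
    qed
  qed
  show ?case using key[OF refl Suc.prems(1)] Suc.prems(2) D_def by simp
qed

lemma mader_bound:
  assumes "simple_graph V E" "Kr_minor_free r V E"
  shows "card E \<le> Dm r * card V"
  using mader[OF assms(1), of r] assms(2) unfolding Kr_minor_free_def by fastforce


lemma arith_key:
  fixes d s t D :: nat
  assumes "s + 1 + t = d" "t \<le> 2 * D" "s \<ge> 1"
  shows "d \<le> (4 * D + 2) * s"
proof -
  have a: "(4 * D + 2) * s = 4 * D * s + 2 * s" by (simp add: algebra_simps)
  have b: "4 * D * s \<ge> 4 * D" using assms(3) by simp
  show ?thesis using a b assms by linarith
qed

lemma part2:
  fixes r :: nat
  assumes r3: "r \<ge> 3" and fB: "finite B"
  shows "\<forall>(V::'a set) E A. simple_graph V E \<and> Kr_minor_free r V E \<and> A \<union> B = V \<and> A \<inter> B = {} \<and>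
      (\<forall>e\<in>E. e \<inter> A \<noteq> {}) \<longrightarrow>
      card E + (4 * Dm r + 1) * card {e\<in>E. e \<subseteq> A} \<le> (r - 2) * card B + (4 * Dm r + 2) * Dm r * card A"
  using fB
proof (induction B rule: finite_induct)
  case empty
  show ?case
  proof (intro allI impI)
    fix V :: "'a set" and E A
    assume h: "simple_graph V E \<and> Kr_minor_free r V E \<and> A \<union> {} = V \<and> A \<inter> {} = {} \<and> (\<forall>e\<in>E. e \<inter> A \<noteq> {})"
    then have VA: "V = A" by simp
    have cb: "card E \<le> Dm r * card A" using mader_bound[of V E r] h VA by simp
    have "{e\<in>E. e \<subseteq> A} = E" using h VA unfolding simple_graph_def by auto
    then have "card E + (4 * Dm r + 1) * card {e\<in>E. e \<subseteq> A} = (4 * Dm r + 2) * card E" by simp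
    also have "\<dots> \<le> (4 * Dm r + 2) * (Dm r * card A)" using cb by (rule mult_le_mono2)
    finally show "card E + (4 * Dm r + 1) * card {e\<in>E. e \<subseteq> A} \<le> (r - 2) * card {} + (4 * Dm r + 2) * Dm r * card A"
      by (simp add: algebra_simps)
  qed
next
  case (insert b B0)
  show ?case
  proof (intro allI impI)
    fix V :: "'a set" and E A
    assume h: "simple_graph V E \<and> Kr_minor_free r V E \<and> A \<union> insert b B0 = V \<and> A \<inter> insert b B0 = {} \<and> (\<forall>e\<in>E. e \<inter> A \<noteq> {})"
    define D where "D = Dm r"
    have sg: "simple_graph V E" and fr: "Kr_minor_free r V E" and VAB: "A \<union> insert b B0 = V"
      and dj: "A \<inter> insert b B0 = {}" and meet: "\<forall>e\<in>E. e \<inter> A \<noteq> {}" using h by auto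
    have bA: "b \<notin> A" using dj by auto
    have bV: "b \<in> V" using VAB by auto
    define N where "N = nb E b"
    define d where "d = card N"
    have NA: "N \<subseteq> A"
    proof
      fix w assume "w \<in> N"
      then have "{b, w} \<in> E" unfolding N_def nb_def by auto
      then have "{b, w} \<inter> A \<noteq> {}" using meet by auto
      then show "w \<in> A" using bA by auto
    qed
    have fN: "finite N" unfolding N_def using nb_fin[OF sg] .
    have NV: "N \<subseteq> V" unfolding N_def using nb_sub[OF sg] .
    have cs: "card E = card {e\<in>E. b \<notin> e} + d" unfolding d_def N_def by (rule card_split[OF sg])
    have cB: "card (insert b B0) = card B0 + 1" using insert by simp
    have cBr: "(r - 2) * card (insert b B0) = (r - 2) * card B0 + (r - 2)" using cB by simp
    have IH: "\<And>V' E'. simple_graph V' E' \<Longrightarrow> Kr_minor_free r V' E' \<Longrightarrow> A \<union> B0 = V' \<Longrightarrow> A \<inter> B0 = {} \<Longrightarrow>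
      (\<forall>e\<in>E'. e \<inter> A \<noteq> {}) \<Longrightarrow>
      card E' + (4 * D + 1) * card {e\<in>E'. e \<subseteq> A} \<le> (r - 2) * card B0 + (4 * D + 2) * D * card A"
      using insert.IH unfolding D_def by blast
    have AB0: "A \<union> B0 = V - {b}" using VAB dj insert(2) by auto
    have dj0: "A \<inter> B0 = {}" using dj by auto
    show "card E + (4 * Dm r + 1) * card {e\<in>E. e \<subseteq> A} \<le> (r - 2) * card (insert b B0) + (4 * Dm r + 2) * Dm r * card A"
    proof (cases "d \<le> r - 2")
      case True
      have st: "minor_step (V, E) (V - {b}, {e\<in>E. b \<notin> e})"
        using minor_step.del_v[of b "(V, E)"] bV unfolding delete_vertex_def by simp
      have sg': "simple_graph (V - {b}) {e\<in>E. b \<notin> e}" using step_simple[OF st] sg by simp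
      have fr': "Kr_minor_free r (V - {b}) {e\<in>E. b \<notin> e}" using free_minor[OF fr step_minor[OF st]] .
      have m': "\<forall>e\<in>{e\<in>E. b \<notin> e}. e \<inter> A \<noteq> {}" using meet by auto
      have ih: "card {e\<in>E. b \<notin> e} + (4 * D + 1) * card {e\<in>{e\<in>E. b \<notin> e}. e \<subseteq> A} \<le> (r - 2) * card B0 + (4 * D + 2) * D * card A"
        using IH[OF sg' fr' AB0 dj0 m'] .
      have "{e\<in>{e\<in>E. b \<notin> e}. e \<subseteq> A} = {e\<in>E. e \<subseteq> A}" using bA by auto
      then have ih2: "card {e\<in>E. b \<notin> e} + (4 * D + 1) * card {e\<in>E. e \<subseteq> A} \<le> (r - 2) * card B0 + (4 * D + 2) * D * card A"
        using ih by simp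
      show ?thesis using ih2 cs cBr True unfolding D_def[symmetric] by linarith
    next
      case False
      then have dr: "d \<ge> r - 1" by simp
      define f where "f = (\<lambda>y. card (nb E y \<inter> N))"
      have Nne: "N \<noteq> {}" using dr r3 d_def by auto
      define m where "m = Min (f ` N)"
      have "m \<in> f ` N" unfolding m_def using fN Nne by simp
      then obtain a where aN: "a \<in> N" and fa: "f a = m" by auto
      have amin: "\<forall>y\<in>N. f a \<le> f y" using fa fN unfolding m_def by simp
      have aA: "a \<in> A" using aN NA by auto
      show ?thesis
      proof (cases "f a \<ge> d - 1")
        case True
        have cl: "{y, z} \<in> E" if "y \<in> N" "z \<in> N" "y \<noteq> z" for y z
        proof -
          have sub: "nb E y \<inter> N \<subseteq> N - {y}" using nb_noloop[OF sg, of y] by auto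
          have "card (N - {y}) = d - 1" using that fN d_def by simp
          moreover have "f y \<ge> d - 1" using True amin that by fastforce
          ultimately have "nb E y \<inter> N = N - {y}" using sub fN f_def
            by (metis card_subset_eq finite_Diff le_antisym card_mono)
          then have "z \<in> nb E y" using that by auto
          then show ?thesis unfolding nb_def by simp
        qed
        obtain S where S: "S \<subseteq> N" "card S = r - 1" "finite S"
          using obtain_subset_with_card_n[of "r - 1" N] dr d_def by auto
        have bS: "b \<notin> S" using S NA bA by auto
        have cS: "card (insert b S) = r" using S bS r3 by simp
        have SV: "insert b S \<subseteq> V" using S NV bV by auto
        have clq: "\<forall>p\<in>insert b S. \<forall>q\<in>insert b S. p \<noteq> q \<longrightarrow> {p, q} \<in> E"
        proof (intro ballI impI)
          fix p q assume pq: "p \<in> insert b S" "q \<in> insert b S" "p \<noteq> q"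
          show "{p, q} \<in> E"
          proof (cases "p = b")
            case True then have "q \<in> N" using pq S by auto
            then show ?thesis using True unfolding N_def nb_def by simp
          next
            case pb: False
            show ?thesis
            proof (cases "q = b")
              case True then have "p \<in> N" using pq S pb by auto
              then show ?thesis using True unfolding N_def nb_def by (simp add: insert_commute)
            next
              case False then show ?thesis using cl pq pb S by auto
            qed
          qed
        qed
        have "is_minor (insert b S, complete_graph_on (insert b S)) (V, E)"
          by (rule clique_minor[OF sg SV clq])
        then have False using fr cS S(3) unfolding Kr_minor_free_def by blast
        then show ?thesis ..
      next
        case False
        define t where "t = f a"
        have td: "t < d - 1" using False t_def by simp
        define EN where "EN = {e\<in>E. e \<subseteq> N}"
        have sgN: "simple_graph N EN" using sg fN unfolding simple_graph_def EN_def by auto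
        have frN: "Kr_minor_free r N EN" using free_minor[OF fr induced_minor[OF sg NV]] EN_def by simp
        have cEN: "card EN \<le> D * d" using mader_bound[OF sgN frN] D_def d_def by simp
        have hs: "(\<Sum>y\<in>N. f y) = 2 * card EN" unfolding f_def EN_def by (rule handshake[OF sg NV])
        have "(\<Sum>y\<in>N. t) \<le> (\<Sum>y\<in>N. f y)" using amin t_def by (intro sum_mono) auto
        then have "d * t \<le> 2 * card EN" using hs d_def by (simp add: mult.commute)
        moreover have "2 * card EN \<le> 2 * D * d" using cEN by simp
        ultimately have "d * t \<le> 2 * D * d" by linarith
        moreover have "d > 0" using Nne fN d_def by (simp add: card_gt_0_iff)
        ultimately have t2D: "t \<le> 2 * D" by (metis mult.commute mult_le_cancel2 gr_implies_not0)
        have abE: "{a, b} \<in> E" using aN unfolding N_def nb_def by (simp add: insert_commute)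
        have ab: "a \<noteq> b" using aA bA by auto
        define G' where "G' = contract_edge a b (V, E)"
        have st: "minor_step (V, E) G'" unfolding G'_def using abE ab by (intro minor_step.contr) auto
        have sg': "simple_graph (fst G') (snd G')" using step_simple[OF st] sg by simp
        have fr': "Kr_minor_free r (fst G') (snd G')" using free_minor[OF fr] step_minor[OF st] by simp
        have V': "fst G' = V - {b}" unfolding G'_def contract_edge_def by simp
        have m': "\<forall>e\<in>snd G'. e \<inter> A \<noteq> {}"
        proof
          fix e assume "e \<in> snd G'"
          then have "(e \<in> E) \<or> (\<exists>w. e = {a, w})" unfolding G'_def contract_edge_def by auto
          then show "e \<inter> A \<noteq> {}" using meet aA by auto
        qed
        have ih: "card (snd G') + (4 * D + 1) * card {e\<in>snd G'. e \<subseteq> A} \<le> (r - 2) * card B0 + (4 * D + 2) * D * card A"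
          using IH[OF sg' fr'] AB0 dj0 m' V' by simp
        define s where "s = card (nb E b - {a} - nb E a)"
        have c1: "card {e\<in>E. b \<notin> e} + s \<le> card (snd G')"
          unfolding s_def G'_def by (rule contr_card[OF sg abE ab])
        have c2: "card {e\<in>E. e \<subseteq> A} + s \<le> card {e\<in>snd G'. e \<subseteq> A}"
          unfolding s_def G'_def by (rule contr_cardA[OF sg abE ab bA aA]) (use NA N_def in simp)
        have ainb: "a \<in> nb E b" using aN N_def by simp
        have c3: "s + 1 + t = d"
          using nb_count[OF sg ainb] unfolding s_def t_def f_def d_def N_def by (simp add: Int_commute)
        have s1: "s \<ge> 1" using c3 td by arith
        have k: "d \<le> (4 * D + 2) * s" by (rule arith_key[OF c3 t2D s1])
        have c4: "(4 * D + 1) * card {e\<in>E. e \<subseteq> A} + (4 * D + 1) * s \<le> (4 * D + 1) * card {e\<in>snd G'. e \<subseteq> A}"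
          using mult_le_mono2[OF c2, of "4 * D + 1"] by (simp add: algebra_simps)
        have c5: "(4 * D + 2) * s = (4 * D + 1) * s + s" by (simp add: algebra_simps)
        have "card E + (4 * D + 1) * card {e\<in>E. e \<subseteq> A} \<le> (r - 2) * card B0 + (4 * D + 2) * D * card A"
          using ih c1 cs c4 c5 k by linarith
        then show ?thesis using cBr unfolding D_def[symmetric] by linarith
      qed
    qed
  qed
qed


theorem lemma2p5:
  fixes r :: nat
  assumes "r \<ge> 3"
  shows "\<exists>C::real. \<forall>(V::nat set) E A B.
           simple_graph V E \<and> Kr_minor_free r V E \<and> bipartite_with V E A B \<longrightarrow>
           real (card E) \<le> (real r - 2) * real (card V) + C * real (card A)"
proof (intro exI[of _ "real ((4 * Dm r + 2) * Dm r)"] allI impI)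
  fix V :: "nat set" and E A B
  assume h: "simple_graph V E \<and> Kr_minor_free r V E \<and> bipartite_with V E A B"
  have sg: "simple_graph V E" and fr: "Kr_minor_free r V E" using h by auto
  have AB: "A \<union> B = V" "A \<inter> B = {}" and bp: "\<forall>e\<in>E. \<exists>a\<in>A. \<exists>b\<in>B. e = {a, b}"
    using h unfolding bipartite_with_def by auto
  have fV: "finite V" using sg simple_graph_def by auto
  have fB: "finite B" using AB fV by (metis finite_Un)
  have meet: "\<forall>e\<in>E. e \<inter> A \<noteq> {}" using bp by blast
  have "card E + (4 * Dm r + 1) * card {e\<in>E. e \<subseteq> A} \<le> (r - 2) * card B + (4 * Dm r + 2) * Dm r * card A"
    using part2[OF assms fB] sg fr AB meet by blast
  moreover have "card B \<le> card V" using AB fV by (metis card_mono sup_ge2)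
  then have "(r - 2) * card B \<le> (r - 2) * card V" by simp
  ultimately have "card E \<le> (r - 2) * card V + (4 * Dm r + 2) * Dm r * card A" by linarith
  then have "real (card E) \<le> real ((r - 2) * card V + (4 * Dm r + 2) * Dm r * card A)" by linarith
  also have "\<dots> = real (r - 2) * real (card V) + real ((4 * Dm r + 2) * Dm r) * real (card A)" by simp
  also have "real (r - 2) = real r - 2" using assms by simp
  finally show "real (card E) \<le> (real r - 2) * real (card V) + real ((4 * Dm r + 2) * Dm r) * real (card A)" .
qed

end
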